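(* For every integer $k\ge 2$, the complete graph $K_{2k}$ has a quasi-majority neighbor sum distinguishing $3$-edge-coloring in which at least $k-1$ vertices are each incident to at most $k-1$ edges of color $2$.
   Context: A $3$-edge-coloring of $G$ is any map $c:E(G)\to\{1,2,3\}$ (adjacent edges may share colors). It induces $\sigma_c(v)=\sum_{u\in N(v)}c(vu)$. The coloring is neighbor sum distinguishing if $\sigma_c(u)\ne\sigma_c(v)$ for every edge $uv$, and quasi-majority if every vertex $v$ is incident to at most $\lceil d(v)/2\rceil$ edges of each single color. *)

theory Defs
  imports Main
begin

text \<open>Simple graphs are given by an edge set E of 2-element vertex sets.
  An edge colouring is a map c from edges to colours (natural numbers).\<close>

definition nbrs :: "'a set set \<Rightarrow> 'a \<Rightarrow> 'a set" where
  "nbrs E v = {u. {v, u} \<in> E}"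

definition deg :: "'a set set \<Rightarrow> 'a \<Rightarrow> nat" where
  "deg E v = card (nbrs E v)"

definition is_3_edge_coloring :: "'a set set \<Rightarrow> ('a set \<Rightarrow> nat) \<Rightarrow> bool" where
  "is_3_edge_coloring E c \<longleftrightarrow> (\<forall>e\<in>E. c e \<in> {1, 2, 3})"

definition sigma_c :: "'a set set \<Rightarrow> ('a set \<Rightarrow> nat) \<Rightarrow> 'a \<Rightarrow> nat" where
  "sigma_c E c v = (\<Sum>u\<in>nbrs E v. c {v, u})"

definition nsd :: "'a set set \<Rightarrow> ('a set \<Rightarrow> nat) \<Rightarrow> bool" where
  "nsd E c \<longleftrightarrow> (\<forall>u v. {u, v} \<in> E \<longrightarrow> sigma_c E c u \<noteq> sigma_c E c v)"

definition color_deg :: "'a set set \<Rightarrow> ('a set \<Rightarrow> nat) \<Rightarrow> 'a \<Rightarrow> nat \<Rightarrow> nat" where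
  "color_deg E c v i = card {u \<in> nbrs E v. c {v, u} = i}"

text \<open>quasi-majority: at most ceil(d(v)/2) = (d(v)+1) div 2 edges of each colour at v.\<close>
definition quasi_majority :: "'a set \<Rightarrow> 'a set set \<Rightarrow> ('a set \<Rightarrow> nat) \<Rightarrow> bool" where
  "quasi_majority V E c \<longleftrightarrow> (\<forall>v\<in>V. \<forall>i. color_deg E c v i \<le> (deg E v + 1) div 2)"

definition K_edges :: "nat \<Rightarrow> nat set set" where
  "K_edges n = {{u, v} | u v. u < n \<and> v < n \<and> u \<noteq> v}"

end

theory Submission
  imports Defs
begin

lemma K_mem: "{u, v} \<in> K_edges n \<longleftrightarrow> u < n \<and> v < n \<and> u \<noteq> v"
  unfolding K_edges_def by (auto simp: doubleton_eq_iff)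

lemma K_nbrs: "nbrs (K_edges n) v = (if v < n then {..<n} - {v} else {})"
  unfolding nbrs_def by (auto simp: K_mem)

lemma K_deg: "v < n \<Longrightarrow> deg (K_edges n) v = n - 1"
  unfolding deg_def K_nbrs by simp

lemma K_cd: "v < n \<Longrightarrow> color_deg (K_edges n) c v i = card {u \<in> {..<n} - {v}. c {v,u} = i}"
  unfolding color_deg_def K_nbrs by simp

lemma K_sg: "v < n \<Longrightarrow> sigma_c (K_edges n) c v = (\<Sum>u\<in>{..<n} - {v}. c {v,u})"
  unfolding sigma_c_def K_nbrs by simp

lemma K_is3: "is_3_edge_coloring (K_edges n) c \<longleftrightarrow> (\<forall>u v. u < n \<and> v < n \<and> u \<noteq> v \<longrightarrow> c {u,v} \<in> {1,2,3})"
  unfolding is_3_edge_coloring_def K_edges_def by auto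

lemma K_nsd: "nsd (K_edges n) c \<longleftrightarrow> (\<forall>u v. u < n \<and> v < n \<and> u \<noteq> v \<longrightarrow> sigma_c (K_edges n) c u \<noteq> sigma_c (K_edges n) c v)"
  unfolding nsd_def K_mem by auto

lemma filt_insert: "{x \<in> insert a A. P x} = (if P a then insert a {x\<in>A. P x} else {x\<in>A. P x})" by auto

definition c0 :: "nat set \<Rightarrow> nat" where
  "c0 e = (if \<Sum>e \<le> 2 then 1 else if \<Sum>e \<le> 4 then 2 else 3)"

lemma card_filt_sum: "finite A \<Longrightarrow> card {u \<in> A. P u} = (\<Sum>u\<in>A. if P u then 1 else 0)"
  by (subst card_eq_sum, rule sum.inter_filter)

lemma K_cd_sum: "v < n \<Longrightarrow> color_deg (K_edges n) c v i = (\<Sum>u\<in>{..<n} - {v}. if c {v,u} = i then 1 else 0)"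
  by (subst K_cd, assumption, rule card_filt_sum, simp)

lemma four: "{..<4::nat} = {0,1,2,3}" by auto

lemma base_cd: "v < 4 \<Longrightarrow> color_deg (K_edges 4) c0 v i \<le> 2"
proof -
  assume "v < 4"
  then have "v = 0 \<or> v = 1 \<or> v = 2 \<or> v = 3" by auto
  then show ?thesis
    by (elim disjE) (simp_all add: K_cd_sum four c0_def insert_Diff_if)
qed

definition inv :: "nat \<Rightarrow> (nat set \<Rightarrow> nat) \<Rightarrow> nat set \<Rightarrow> bool" where
  "inv k c S \<longleftrightarrow> is_3_edge_coloring (K_edges (2*k)) c
            \<and> quasi_majority {..<2*k} (K_edges (2*k)) c
            \<and> nsd (K_edges (2*k)) c
            \<and> S \<subseteq> {..<2*k} \<and> card S \<ge> k - 1 \<and>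
                 (\<forall>v\<in>S. color_deg (K_edges (2*k)) c v 2 \<le> k - 1)
            \<and> (\<forall>v<2*k. 3*k - 2 \<le> sigma_c (K_edges (2*k)) c v \<and> sigma_c (K_edges (2*k)) c v \<le> 5*k - 2)"

lemma base_sg: "v < 4 \<Longrightarrow> sigma_c (K_edges 4) c0 v = v + 4"
proof -
  assume "v < 4"
  then have "v = 0 \<or> v = 1 \<or> v = 2 \<or> v = 3" by auto
  then show ?thesis
    by (elim disjE) (simp_all add: K_sg four c0_def insert_Diff_if)
qed

lemma base_cd2: "color_deg (K_edges 4) c0 0 2 \<le> 1"
  by (simp add: K_cd_sum four c0_def insert_Diff_if)

lemma base_inv: "inv 2 c0 {0}"
  unfolding inv_def
proof (intro conjI)
  show "is_3_edge_coloring (K_edges (2 * 2)) c0"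
    unfolding is_3_edge_coloring_def c0_def by auto
  show "quasi_majority {..<2 * 2} (K_edges (2 * 2)) c0"
    unfolding quasi_majority_def using base_cd K_deg by simp
  show "nsd (K_edges (2 * 2)) c0"
    unfolding K_nsd using base_sg by simp
  show "\<forall>v<2 * 2. 3 * 2 - 2 \<le> sigma_c (K_edges (2 * 2)) c0 v \<and> sigma_c (K_edges (2 * 2)) c0 v \<le> 5 * 2 - 2"
    using base_sg by simp
qed (use base_cd2 in auto)


lemma sum_ifT: "finite A \<Longrightarrow> (\<Sum>u\<in>A. if u \<in> T then (f::nat) else g) = f * card (A \<inter> T) + g * card (A - T)"
  by (simp add: sum.If_cases Int_def set_diff_eq)

lemma step_inv:
  assumes k2: "k \<ge> 2" and I: "inv k c S"
  shows "\<exists>c' S'. inv (Suc k) c' S'"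
proof -
  define n where "n = 2*k"
  have n2: "2 * Suc k = Suc (Suc n)" by (simp add: n_def)
  from I have is3: "is_3_edge_coloring (K_edges n) c"
    and qm: "quasi_majority {..<n} (K_edges n) c"
    and ns: "nsd (K_edges n) c"
    and SS: "S \<subseteq> {..<n}" and cS: "card S \<ge> k - 1"
    and S2: "\<forall>v\<in>S. color_deg (K_edges n) c v 2 \<le> k - 1"
    and bd: "\<forall>v<n. 3*k - 2 \<le> sigma_c (K_edges n) c v \<and> sigma_c (K_edges n) c v \<le> 5*k - 2"
    unfolding inv_def n_def by auto
  obtain T where TS: "T \<subseteq> S" and cT: "card T = k - 1"
    using obtain_subset_with_card_n[OF cS] by metis
  have Tn: "T \<subseteq> {..<n}" using TS SS by auto
  have fT: "finite T" using Tn finite_subset by blast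
  have cnT: "card ({..<n} - T) = k + 1"
    using Tn cT k2 by (simp add: card_Diff_subset fT n_def)
  define c' where "c' e = (if e \<subseteq> {..<n} then c e else if n \<in> e \<and> Suc n \<in> e then 2
      else if e \<inter> T \<noteq> {} then 2 else if n \<in> e then 3 else (1::nat))" for e
  have ca: "c' {u,v} = c {u,v}" if "u < n" "v < n" for u v
    using that by (simp add: c'_def)
  have cx: "c' {v,n} = (if v \<in> T then 2 else 3)" if "v < n" for v
    using that Tn by (auto simp: c'_def)
  have cy: "c' {v,Suc n} = (if v \<in> T then 2 else 1)" if "v < n" for v
    using that Tn by (auto simp: c'_def)
  have cxy: "c' {n, Suc n} = 2" by (simp add: c'_def)
  have cx': "c' {n,v} = (if v \<in> T then 2 else 3)" if "v < n" for v
    using cx[OF that] by (simp add: insert_commute)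
  have cy': "c' {Suc n,v} = (if v \<in> T then 2 else 1)" if "v < n" for v
    using cy[OF that] by (simp add: insert_commute)
  have cyx: "c' {Suc n, n} = 2" by (simp add: c'_def)
  have setv: "{..<Suc (Suc n)} - {v} = insert n (insert (Suc n) ({..<n} - {v}))" if "v < n" for v
    using that by auto
  have setx: "{..<Suc (Suc n)} - {n} = insert (Suc n) {..<n}" by auto
  have sety: "{..<Suc (Suc n)} - {Suc n} = insert n {..<n}" by auto
  let ?E = "K_edges (Suc (Suc n))"
  have sgv: "sigma_c ?E c' v = sigma_c (K_edges n) c v + 4" if "v < n" for v
  proof -
    have "sigma_c ?E c' v = (\<Sum>u\<in>{..<n} - {v}. c' {v,u}) + c' {v,n} + c' {v, Suc n}"
      using that by (simp add: K_sg setv)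
    also have "(\<Sum>u\<in>{..<n} - {v}. c' {v,u}) = (\<Sum>u\<in>{..<n} - {v}. c {v,u})"
      using that by (intro sum.cong) (auto simp: ca)
    finally show ?thesis using that by (simp add: K_sg cx cy)
  qed
  have cdv: "color_deg ?E c' v i = color_deg (K_edges n) c v i
      + (if c' {v,n} = i then 1 else 0) + (if c' {v,Suc n} = i then 1 else 0)" if "v < n" for v i
  proof -
    have "color_deg ?E c' v i = (\<Sum>u\<in>{..<n} - {v}. if c' {v,u} = i then 1 else 0)
        + (if c' {v,n} = i then 1 else 0) + (if c' {v,Suc n} = i then 1 else 0)"
      using that by (simp add: K_cd_sum setv)
    also have "(\<Sum>u\<in>{..<n} - {v}. if c' {v,u} = i then 1 else 0) = (\<Sum>u\<in>{..<n} - {v}. if c {v,u} = i then 1 else 0)"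
      using that by (intro sum.cong) (auto simp: ca)
    finally show ?thesis using that by (simp add: K_cd_sum)
  qed
  have sgx: "sigma_c ?E c' n = 5 * Suc k - 2"
  proof -
    have "sigma_c ?E c' n = (\<Sum>u\<in>{..<n}. c' {n,u}) + 2"
      by (simp add: K_sg setx cxy)
    also have "(\<Sum>u\<in>{..<n}. c' {n,u}) = (\<Sum>u\<in>{..<n}. if u \<in> T then 2 else 3)"
      by (intro sum.cong) (auto simp: cx')
    also have "\<dots> = 2 * card T + 3 * card ({..<n} - T)"
      using Tn by (simp add: sum_ifT Int_absorb1)
    finally show ?thesis using cT cnT k2 by simp
  qed
  have sgy: "sigma_c ?E c' (Suc n) = 3 * Suc k - 2"
  proof -
    have "sigma_c ?E c' (Suc n) = (\<Sum>u\<in>{..<n}. c' {Suc n,u}) + 2"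
      by (simp add: K_sg sety cyx)
    also have "(\<Sum>u\<in>{..<n}. c' {Suc n,u}) = (\<Sum>u\<in>{..<n}. if u \<in> T then 2 else 1)"
      by (intro sum.cong) (auto simp: cy')
    also have "\<dots> = 2 * card T + 1 * card ({..<n} - T)"
      using Tn by (simp add: sum_ifT Int_absorb1)
    finally show ?thesis using cT cnT k2 by simp
  qed
  have cdx: "color_deg ?E c' n i \<le> Suc k" for i
  proof -
    have "color_deg ?E c' n i = (\<Sum>u\<in>{..<n}. if c' {n,u} = i then 1 else 0) + (if 2 = i then 1 else 0)"
      by (simp add: K_cd_sum setx cxy)
    also have "(\<Sum>u\<in>{..<n}. if c' {n,u} = i then 1 else 0) = (\<Sum>u\<in>{..<n}. if u \<in> T then (if 2 = i then 1 else 0) else (if 3 = i then 1 else 0))"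
      by (intro sum.cong) (auto simp: cx')
    also have "\<dots> = (if 2 = i then 1 else 0) * card T + (if 3 = i then 1 else 0) * card ({..<n} - T)"
      using Tn by (simp add: sum_ifT Int_absorb1)
    finally show ?thesis using cT cnT k2 by auto
  qed
  have cdy: "color_deg ?E c' (Suc n) i \<le> Suc k" for i
  proof -
    have "color_deg ?E c' (Suc n) i = (\<Sum>u\<in>{..<n}. if c' {Suc n,u} = i then 1 else 0) + (if 2 = i then 1 else 0)"
      by (simp add: K_cd_sum sety cyx)
    also have "(\<Sum>u\<in>{..<n}. if c' {Suc n,u} = i then 1 else 0) = (\<Sum>u\<in>{..<n}. if u \<in> T then (if 2 = i then 1 else 0) else (if 1 = i then 1 else 0))"
      by (intro sum.cong) (auto simp: cy')
    also have "\<dots> = (if 2 = i then 1 else 0) * card T + (if 1 = i then 1 else 0) * card ({..<n} - T)"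
      using Tn by (simp add: sum_ifT Int_absorb1)
    finally show ?thesis using cT cnT k2 by auto
  qed
  have degn: "deg (K_edges n) v = 2*k - 1" if "v < n" for v
    using K_deg[OF that] n_def by simp
  have qmv: "color_deg (K_edges n) c v i \<le> k" if "v < n" for v i
  proof -
    have "color_deg (K_edges n) c v i \<le> (deg (K_edges n) v + 1) div 2"
      using qm that unfolding quasi_majority_def by blast
    moreover have "(deg (K_edges n) v + 1) div 2 = k" using degn[OF that] k2 by simp
    ultimately show ?thesis by simp
  qed
  have inv': "inv (Suc k) c' ({..<n} - T)"
    unfolding inv_def n2
  proof (intro conjI)
    show "is_3_edge_coloring ?E c'"
      unfolding K_is3
    proof (intro allI impI)
      fix u v assume uv: "u < Suc (Suc n) \<and> v < Suc (Suc n) \<and> u \<noteq> v"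
      show "c' {u, v} \<in> {1, 2, 3}"
      proof (cases "u < n \<and> v < n")
        case True
        then show ?thesis using is3 uv ca unfolding K_is3 by auto
      next
        case False
        then show ?thesis unfolding c'_def by auto
      qed
    qed
    show "quasi_majority {..<Suc (Suc n)} ?E c'"
      unfolding quasi_majority_def
    proof (intro ballI allI)
      fix v i assume v: "v \<in> {..<Suc (Suc n)}"
      have dg: "(deg ?E v + 1) div 2 = Suc k" using v K_deg[of v "Suc (Suc n)"] n_def by simp
      show "color_deg ?E c' v i \<le> (deg ?E v + 1) div 2"
        unfolding dg
      proof (cases "v < n")
        case True
        show "color_deg ?E c' v i \<le> Suc k"
        proof (cases "v \<in> T")
          case True
          then have "color_deg (K_edges n) c v 2 \<le> k - 1" using S2 TS by auto
          then show ?thesis using \<open>v < n\<close> True cdv[of v i] cx cy qmv[of v i] k2 by auto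
        next
          case False
          then show ?thesis using \<open>v < n\<close> cdv[of v i] cx cy qmv[of v i] by auto
        qed
      next
        case False
        then have "v = n \<or> v = Suc n" using v by auto
        then show "color_deg ?E c' v i \<le> Suc k" using cdx cdy by auto
      qed
    qed
    show "nsd ?E c'"
      unfolding K_nsd
    proof (intro allI impI)
      fix u v assume uv: "u < Suc (Suc n) \<and> v < Suc (Suc n) \<and> u \<noteq> v"
      have old: "sigma_c ?E c' w + 0 \<in> {3*k+2 .. 5*k+2}" if "w < n" for w
        using sgv[OF that] bd that k2 by auto
      show "sigma_c ?E c' u \<noteq> sigma_c ?E c' v"
      proof (cases "u < n \<and> v < n")
        case True
        then show ?thesis using sgv ns uv unfolding K_nsd by auto
      next
        case False
        then have "u = n \<or> u = Suc n \<or> v = n \<or> v = Suc n" using uv by auto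
        then show ?thesis using uv old[of u] old[of v] sgx sgy k2 by (auto simp: less_Suc_eq)
      qed
    qed
    show "{..<n} - T \<subseteq> {..<Suc (Suc n)}" by auto
    show "Suc k - 1 \<le> card ({..<n} - T)" using cnT by simp
    show "\<forall>v\<in>{..<n} - T. color_deg ?E c' v 2 \<le> Suc k - 1"
      using cdv cx cy qmv by auto
    show "\<forall>v<Suc (Suc n). 3 * Suc k - 2 \<le> sigma_c ?E c' v \<and> sigma_c ?E c' v \<le> 5 * Suc k - 2"
    proof (intro allI impI)
      fix v assume v: "v < Suc (Suc n)"
      show "3 * Suc k - 2 \<le> sigma_c ?E c' v \<and> sigma_c ?E c' v \<le> 5 * Suc k - 2"
      proof (cases "v < n")
        case True
        then show ?thesis using sgv[OF True] bd k2 by auto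
      next
        case False
        then have "v = n \<or> v = Suc n" using v by auto
        then show ?thesis using sgx sgy k2 by auto
      qed
    qed
  qed
  then show ?thesis by blast
qed

lemma all_inv: "k \<ge> 2 \<Longrightarrow> \<exists>c S. inv k c S"
proof (induction k rule: dec_induct)
  case base
  then show ?case using base_inv by blast
next
  case (step m)
  then show ?case using step_inv by auto
qed

theorem mainTheorem19:
  fixes k :: nat
  assumes "k \<ge> 2"
  shows "\<exists>c. is_3_edge_coloring (K_edges (2*k)) c
            \<and> quasi_majority {..<2*k} (K_edges (2*k)) c
            \<and> nsd (K_edges (2*k)) c
            \<and> (\<exists>S \<subseteq> {..<2*k}. card S \<ge> k - 1 \<and>
                 (\<forall>v\<in>S. color_deg (K_edges (2*k)) c v 2 \<le> k - 1))"
proof -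
  obtain c S where "inv k c S" using all_inv[OF assms] by blast
  then show ?thesis unfolding inv_def by blast
qed

end
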